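(* Let $Q:(-\infty,-1)\to(-\infty,0)$ be the inverse of the strictly increasing function $G\mapsto G-e^G$ on $(-\infty,0)$, and define $R:\mathbb{R}\to\mathbb{R}$ by $R(V)=-2(1-e^{Q(V)})^2$ for $V<-1$ and $R(V)=4(V+1)$ for $V\ge -1$. Fix $m<-1$. For $n\in\mathbb{R}$ let $V(t;n)$ denote the unique solution of the initial value problem $$V''+3V'=R(V),\ t>0,\qquad V(0)=m,\quad V'(0)=n,$$ (prime denoting $d/dt$, and $V_t=dV/dt$), defined on its interval of existence. Define $\beta^-=\{n\in\mathbb{R}: \text{there exists } t>0 \text{ with } V_t(t;n)<0\}$, $\beta^0=\{n\in\mathbb{R}: V_t(t;n)>0 \text{ and } V(t;n)\le -1 \text{ for all } t>0\}$, $\beta^+=\{n\in\mathbb{R}: V_t(t;n)>0 \text{ for all } t\ge 0 \text{ and } V(t;n)>-1 \text{ for some } t>0\}$. Then $\mathbb{R}$ is the disjoint union $\mathbb{R}=\beta^-\cup\beta^0\cup\beta^+$.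
   Context: The function $R$ is differentiable on $\mathbb{R}$. *)

theory Defs
  imports "HOL-Analysis.Analysis"
begin

definition Qinv :: "real \<Rightarrow> real" where
  "Qinv V = (THE G. G < 0 \<and> G - exp G = V)"

definition Rfun :: "real \<Rightarrow> real" where
  "Rfun V = (if V < -1 then -2 * (1 - exp (Qinv V))^2 else 4 * (V + 1))"

text \<open>A solution of V'' + 3V' = R(V) (t>0), V(0)=m, V'(0)=n on [0,T), T \<in> (0,\<infinity>].
  W is the derivative V_t.\<close>
definition is_sol :: "real \<Rightarrow> real \<Rightarrow> ereal \<Rightarrow> (real \<Rightarrow> real) \<Rightarrow> (real \<Rightarrow> real) \<Rightarrow> bool" where
  "is_sol m n T V W \<longleftrightarrow> 0 < T \<and> V 0 = m \<and> W 0 = n \<and>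
     (\<forall>t. 0 \<le> t \<and> ereal t < T \<longrightarrow>
        (V has_real_derivative W t) (at t within {0..}) \<and> continuous (at t within {0..}) W) \<and>
     (\<forall>t. 0 < t \<and> ereal t < T \<longrightarrow>
        (W has_real_derivative (Rfun (V t) - 3 * W t)) (at t))"

text \<open>Maximal solution (solution on its interval of existence): every solution lives on a
  subinterval and agrees with it there.\<close>
definition max_sol :: "real \<Rightarrow> real \<Rightarrow> ereal \<Rightarrow> (real \<Rightarrow> real) \<Rightarrow> (real \<Rightarrow> real) \<Rightarrow> bool" where
  "max_sol m n T V W \<longleftrightarrow> is_sol m n T V W \<and>
     (\<forall>T' V' W'. is_sol m n T' V' W' \<longrightarrow> T' \<le> T \<and>
        (\<forall>t. 0 \<le> t \<and> ereal t < T' \<longrightarrow> V' t = V t \<and> W' t = W t))"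

definition beta_minus :: "real \<Rightarrow> real set" where
  "beta_minus m = {n. \<exists>T V W. max_sol m n T V W \<and> (\<exists>t>0. ereal t < T \<and> W t < 0)}"

definition beta_zero :: "real \<Rightarrow> real set" where
  "beta_zero m = {n. \<exists>T V W. max_sol m n T V W \<and>
      (\<forall>t>0. ereal t < T \<longrightarrow> W t > 0 \<and> V t \<le> -1)}"

definition beta_plus :: "real \<Rightarrow> real set" where
  "beta_plus m = {n. \<exists>T V W. max_sol m n T V W \<and>
      (\<forall>t\<ge>0. ereal t < T \<longrightarrow> W t > 0) \<and> (\<exists>t>0. ereal t < T \<and> V t > -1)}"

end

theory Submission imports Defs begin

lemma hmono:
  fixes q1 q2 :: real
  assumes "q1 < q2" "q2 \<le> 0"
  shows "q1 - exp q1 < q2 - exp q2"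
proof -
  obtain z where z: "q1 < z" "z < q2" "exp q2 - exp q1 = (q2 - q1) * exp z"
    using MVT2[of q1 q2 exp exp] assms by (auto intro: DERIV_exp)
  have "exp z < 1" using z assms by simp
  have "(q2 - q1) * exp z < (q2 - q1) * 1"
    by (rule mult_strict_left_mono) (use \<open>exp z < 1\<close> assms in auto)
  hence "exp q2 - exp q1 < q2 - q1" using z(3) by simp
  thus ?thesis by linarith
qed

lemma Qinv_prop:
  fixes V :: real
  assumes "V < -1"
  shows "Qinv V < 0 \<and> Qinv V - exp (Qinv V) = V"
proof -
  have "\<exists>G\<ge>V. G \<le> 0 \<and> G - exp G = V"
    by (rule IVT[of "\<lambda>G. G - exp G"]) (use assms in \<open>auto intro!: continuous_intros\<close>)
  then obtain G where G: "G \<le> 0" "G - exp G = V" by auto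
  have "G \<noteq> 0" using G assms by auto
  with G have G': "G < 0" by simp
  have ex: "\<exists>!G. G < 0 \<and> G - exp G = V"
  proof (rule ex1I[of _ G])
    show "G < 0 \<and> G - exp G = V" using G' G by simp
    fix y assume y: "y < 0 \<and> y - exp y = V"
    show "y = G"
    proof (rule ccontr)
      assume "y \<noteq> G"
      then consider "y < G" | "G < y" by linarith
      thus False
        using hmono[of y G] hmono[of G y] y G G' by cases auto
    qed
  qed
  show ?thesis unfolding Qinv_def using theI'[OF ex] by simp
qed

definition gq :: "real \<Rightarrow> real" where "gq q = -2 * (1 - exp q)^2"

lemma gq_mono:
  fixes q1 q2 :: real assumes "q1 \<le> q2" "q2 \<le> 0"
  shows "gq q1 \<le> gq q2"
proof -
  show ?thesis unfolding gq_def
  proof (rule DERIV_nonneg_imp_nondecreasing[OF assms(1)])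
    fix x assume x: "q1 \<le> x" "x \<le> q2"
    show "\<exists>y. ((\<lambda>q. -2 * (1 - exp q)^2) has_real_derivative y) (at x) \<and> 0 \<le> y"
    proof (intro exI conjI)
      show "((\<lambda>q. -2 * (1 - exp q)^2) has_real_derivative (4 * (1 - exp x) * exp x)) (at x)"
        by (auto intro!: derivative_eq_intros simp: algebra_simps)
      show "0 \<le> 4 * (1 - exp x) * exp x" using x assms by auto
    qed
  qed
qed

lemma kq_mono:
  fixes q1 q2 :: real assumes "q1 \<le> q2" "q2 \<le> 0"
  shows "gq q2 - gq q1 \<le> 4 * ((q2 - exp q2) - (q1 - exp q1))"
proof -
  have "(\<lambda>q. 4 * (q - exp q) - gq q) q1 \<le> (\<lambda>q. 4 * (q - exp q) - gq q) q2"
    unfolding gq_def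
  proof (rule DERIV_nonneg_imp_nondecreasing[OF assms(1)])
    fix x assume x: "q1 \<le> x" "x \<le> q2"
    show "\<exists>y. ((\<lambda>q. 4 * (q - exp q) - -2 * (1 - exp q)^2) has_real_derivative y) (at x) \<and> 0 \<le> y"
    proof (intro exI conjI)
      show "((\<lambda>q. 4 * (q - exp q) - -2 * (1 - exp q)^2) has_real_derivative (4 * (1 - exp x)^2)) (at x)"
        by (auto intro!: derivative_eq_intros simp: algebra_simps power2_eq_square)
      show "0 \<le> 4 * (1 - exp x)^2" by auto
    qed
  qed
  thus ?thesis by simp
qed

lemma Rfun_gq: "V < -1 \<Longrightarrow> Rfun V = gq (Qinv V)"
  by (simp add: Rfun_def gq_def)

lemma Qinv_mono: assumes "a \<le> b" "b < -1" shows "Qinv a \<le> Qinv b"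
proof (rule ccontr)
  assume "\<not> ?thesis"
  hence "Qinv b < Qinv a" by simp
  from hmono[OF this] Qinv_prop[of a] Qinv_prop[of b] assms show False by auto
qed

lemma Rfun_lip_le:
  fixes a b :: real assumes "a \<le> b"
  shows "0 \<le> Rfun b - Rfun a \<and> Rfun b - Rfun a \<le> 4 * (b - a)"
proof (cases "b < -1")
  case True
  hence a: "a < -1" using assms by simp
  have q: "Qinv a \<le> Qinv b" "Qinv b \<le> 0" using Qinv_mono[OF assms True] Qinv_prop[OF True] by auto
  show ?thesis using gq_mono[OF q] kq_mono[OF q] Qinv_prop[OF True] Qinv_prop[OF a]
    Rfun_gq[OF True] Rfun_gq[OF a] by auto
next
  case False
  show ?thesis
  proof (cases "a < -1")
    case a: True
    have q: "Qinv a \<le> 0" using Qinv_prop[OF a] by simp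
    have "gq 0 = 0" by (simp add: gq_def)
    then show ?thesis using gq_mono[OF q] kq_mono[OF q] Qinv_prop[OF a] Rfun_gq[OF a] False
      by (auto simp: Rfun_def)
  next
    case na: False
    then show ?thesis using False assms by (auto simp: Rfun_def)
  qed
qed

lemma Rfun_lip: "\<bar>Rfun a - Rfun b\<bar> \<le> 4 * \<bar>a - b\<bar>"
  using Rfun_lip_le[of a b] Rfun_lip_le[of b a] by (cases "a \<le> b") auto

lemma Rfun_neg: "V < -1 \<Longrightarrow> Rfun V < 0"
proof -
  assume V: "V < -1"
  have "exp (Qinv V) < 1" using Qinv_prop[OF V] by simp
  hence "(1 - exp (Qinv V))^2 > 0" by simp
  thus ?thesis using V by (simp add: Rfun_def)
qed

lemma Rfun_pos: "V > -1 \<Longrightarrow> Rfun V > 0" by (simp add: Rfun_def)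
lemma Rfun_m1: "Rfun (-1) = 0" by (simp add: Rfun_def)


definition F :: "real \<times> real \<Rightarrow> real \<times> real" where
  "F x = (snd x, Rfun (fst x) - 3 * snd x)"

lemma F_lip: "norm (F x - F y) \<le> 8 * norm (x - y)"
proof -
  obtain a b where xy: "x - y = (a, b)" by (cases "x - y")
  have ab: "\<bar>a\<bar> \<le> norm (x - y)" "\<bar>b\<bar> \<le> norm (x - y)"
    using norm_fst_le norm_snd_le xy by (metis real_norm_def)+
  have a: "fst x - fst y = a" and b: "snd x - snd y = b" using xy
    by (metis fst_conv fst_diff) (metis xy snd_conv snd_diff)
  have "F x - F y = (b, Rfun (fst x) - Rfun (fst y) - 3 * b)"
    using b by (simp add: F_def algebra_simps)
  hence "norm (F x - F y) \<le> \<bar>b\<bar> + \<bar>Rfun (fst x) - Rfun (fst y) - 3 * b\<bar>"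
    using norm_Pair_le by (metis real_norm_def)
  also have "\<dots> \<le> \<bar>b\<bar> + 4 * \<bar>a\<bar> + 3 * \<bar>b\<bar>"
    using Rfun_lip[of "fst x" "fst y"] a by auto
  also have "\<dots> \<le> 8 * norm (x - y)" using ab by linarith
  finally show ?thesis .
qed

lemma F_cont: "continuous_on S F"
proof -
  have "8-lipschitz_on UNIV F"
    by (rule lipschitz_onI) (use F_lip in \<open>auto simp: dist_norm\<close>)
  from lipschitz_on_continuous_on[OF this] show ?thesis by (rule continuous_on_subset) auto
qed

definition hh :: real where "hh = 1/16"

lemma step:
  fixes a :: real and x0 :: "real \<times> real"
  shows "\<exists>u. continuous_on {a..a+hh} u \<and> (\<forall>t\<in>{a..a+hh}. u t = x0 + integral {a..t} (\<lambda>s. F (u s)))"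
proof -
  define cl where "cl t = max a (min (a+hh) t)" for t
  have cl_in: "cl t \<in> {a..a+hh}" for t by (auto simp: cl_def hh_def)
  have cl_id: "t \<in> {a..a+hh} \<Longrightarrow> cl t = t" for t by (auto simp: cl_def)
  have cl_cont: "continuous_on UNIV cl" unfolding cl_def by (intro continuous_intros)
  define P where "P f = (\<lambda>t. x0 + integral {a..cl t} (\<lambda>s. F (apply_bcontfun f s)))"
    for f :: "real \<Rightarrow>\<^sub>C (real \<times> real)"
  have Fc: "continuous_on S (\<lambda>s. F (apply_bcontfun f s))" for f S
    by (rule continuous_on_compose2[OF F_cont]) auto
  have P_bc: "P f \<in> bcontfun" for f
  proof -
    let ?c = "\<lambda>x. integral {a..x} (\<lambda>s. F (apply_bcontfun f s))"
    have c: "continuous_on {a..a+hh} ?c"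
      by (rule indefinite_integral_continuous_1) (rule integrable_continuous_real[OF Fc])
    have "continuous_on UNIV (\<lambda>t. x0 + ?c (cl t))"
      by (intro continuous_intros continuous_on_compose2[OF c cl_cont]) (use cl_in in auto)
    moreover have "bounded (range (\<lambda>t. x0 + ?c (cl t)))"
    proof -
      have "compact ((\<lambda>x. x0 + ?c x) ` {a..a+hh})"
        by (intro compact_continuous_image continuous_intros c) auto
      hence "bounded ((\<lambda>x. x0 + ?c x) ` {a..a+hh})" by (rule compact_imp_bounded)
      thus ?thesis by (rule bounded_subset) (use cl_in in auto)
    qed
    ultimately show ?thesis unfolding bcontfun_def P_def by auto
  qed
  define Phi where "Phi f = Bcontfun (P f)" for f
  have Phi_app: "apply_bcontfun (Phi f) t = P f t" for f t
    unfolding Phi_def using Bcontfun_inverse[OF P_bc] by simp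
  have contr: "dist (Phi f) (Phi g) \<le> 1/2 * dist f g" for f g
  proof (rule dist_bound)
    fix t
    let ?c = "cl t"
    have ac: "a \<le> ?c" "?c - a \<le> hh" using cl_in[of t] by auto
    have i1: "(\<lambda>s. F (apply_bcontfun f s)) integrable_on {a..?c}"
      by (rule integrable_continuous_real[OF Fc])
    have i2: "(\<lambda>s. F (apply_bcontfun g s)) integrable_on {a..?c}"
      by (rule integrable_continuous_real[OF Fc])
    have "dist (apply_bcontfun (Phi f) t) (apply_bcontfun (Phi g) t)
        = norm (integral {a..?c} (\<lambda>s. F (apply_bcontfun f s)) - integral {a..?c} (\<lambda>s. F (apply_bcontfun g s)))"
      by (simp add: Phi_app P_def dist_norm)
    also have "\<dots> = norm (integral {a..?c} (\<lambda>s. F (apply_bcontfun f s) - F (apply_bcontfun g s)))"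
      using integral_diff[OF i1 i2] by simp
    also have "\<dots> \<le> (8 * dist f g) * (?c - a)"
    proof (rule integral_bound)
      show "a \<le> ?c" by fact
      show "continuous_on {a..?c} (\<lambda>s. F (apply_bcontfun f s) - F (apply_bcontfun g s))"
        by (intro continuous_intros Fc)
      fix s
      have "norm (F (apply_bcontfun f s) - F (apply_bcontfun g s)) \<le> 8 * norm (apply_bcontfun f s - apply_bcontfun g s)"
        by (rule F_lip)
      also have "\<dots> \<le> 8 * dist f g" using dist_bounded[of f s g] by (simp add: dist_norm)
      finally show "norm (F (apply_bcontfun f s) - F (apply_bcontfun g s)) \<le> 8 * dist f g" .
    qed
    also have "\<dots> \<le> (8 * dist f g) * hh"
      by (rule mult_left_mono) (use ac in auto)
    also have "\<dots> = 1/2 * dist f g" by (simp add: hh_def)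
    finally show "dist (apply_bcontfun (Phi f) t) (apply_bcontfun (Phi g) t) \<le> 1/2 * dist f g" .
  qed
  obtain f where fxp: "Phi f = f" using banach_fix_type[of "1/2" Phi] contr by auto
  show ?thesis
  proof (intro exI conjI ballI)
    show "continuous_on {a..a+hh} (apply_bcontfun f)" by simp
    fix t assume t: "t \<in> {a..a+hh}"
    have "apply_bcontfun f t = apply_bcontfun (Phi f) t" using fxp by simp
    also have "\<dots> = x0 + integral {a..t} (\<lambda>s. F (apply_bcontfun f s))"
      by (simp add: Phi_app P_def cl_id[OF t])
    finally show "apply_bcontfun f t = x0 + integral {a..t} (\<lambda>s. F (apply_bcontfun f s))" .
  qed
qed


definition stp :: "real \<Rightarrow> real \<times> real \<Rightarrow> real \<Rightarrow> real \<times> real" where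
  "stp a x = (SOME u. continuous_on {a..a+hh} u \<and> (\<forall>t\<in>{a..a+hh}. u t = x + integral {a..t} (\<lambda>s. F (u s))))"

lemma stp_prop: "continuous_on {a..a+hh} (stp a x) \<and> (\<forall>t\<in>{a..a+hh}. stp a x t = x + integral {a..t} (\<lambda>s. F (stp a x s)))"
  unfolding stp_def by (rule someI_ex[OF step])

primrec Useq :: "real \<times> real \<Rightarrow> nat \<Rightarrow> real \<Rightarrow> real \<times> real" where
  "Useq x0 0 = (\<lambda>_. x0)"
| "Useq x0 (Suc k) = (\<lambda>t. if t \<le> real k * hh then Useq x0 k t else stp (real k * hh) (Useq x0 k (real k * hh)) t)"

lemma hh_pos: "hh > 0" by (simp add: hh_def)

lemma Useq_sol: "continuous_on {0..real k * hh} (Useq x0 k) \<and>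
   (\<forall>t\<in>{0..real k * hh}. Useq x0 k t = x0 + integral {0..t} (\<lambda>s. F (Useq x0 k s)))"
proof (induction k)
  case 0
  then show ?case by auto
next
  case (Suc k)
  define A where "A = real k * hh"
  define u where "u = Useq x0 k"
  define v where "v = stp A (u A)"
  define w where "w = Useq x0 (Suc k)"
  have A0: "0 \<le> A" using hh_pos by (simp add: A_def)
  have B: "real (Suc k) * hh = A + hh" by (simp add: A_def algebra_simps)
  have w: "w t = (if t \<le> A then u t else v t)" for t by (simp add: w_def u_def v_def A_def)
  have uc: "continuous_on {0..A} u" and ueq: "\<And>t. t \<in> {0..A} \<Longrightarrow> u t = x0 + integral {0..t} (\<lambda>s. F (u s))"
    using Suc.IH by (auto simp: u_def A_def)
  have vc: "continuous_on {A..A+hh} v" and veq: "\<And>t. t \<in> {A..A+hh} \<Longrightarrow> v t = u A + integral {A..t} (\<lambda>s. F (v s))"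
    using stp_prop[of A "u A"] by (auto simp: v_def)
  have vA: "v A = u A" using veq[of A] hh_pos A0 by simp
  have wc: "continuous_on {0..A+hh} w"
  proof -
    have "continuous_on {0..A+hh} (\<lambda>t. if id t \<le> A then u t else v t)"
    proof (rule continuous_on_cases_le)
      show "continuous_on {x \<in> {0..A + hh}. id x \<le> A} u" by (rule continuous_on_subset[OF uc]) auto
      show "continuous_on {x \<in> {0..A + hh}. A \<le> id x} v" by (rule continuous_on_subset[OF vc]) auto
    qed (auto simp: vA intro: continuous_intros)
    thus ?thesis using w by (simp add: w_def[symmetric] fun_eq_iff)
  qed
  have weq: "w t = x0 + integral {0..t} (\<lambda>s. F (w s))" if t: "t \<in> {0..A+hh}" for t
  proof (cases "t \<le> A")
    case True
    have "integral {0..t} (\<lambda>s. F (w s)) = integral {0..t} (\<lambda>s. F (u s))"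
      by (rule integral_cong) (use True in \<open>auto simp: w\<close>)
    then show ?thesis using True t ueq[of t] w[of t] by simp
  next
    case False
    have Fw: "continuous_on {0..t} (\<lambda>s. F (w s))"
      by (rule continuous_on_compose2[OF F_cont continuous_on_subset[OF wc]]) (use t in auto)
    have "integral {0..t} (\<lambda>s. F (w s)) = integral {0..A} (\<lambda>s. F (w s)) + integral {A..t} (\<lambda>s. F (w s))"
      using Henstock_Kurzweil_Integration.integral_combine[where a=0 and c=A and b=t and f="\<lambda>s. F (w s)"] False A0 integrable_continuous_real[OF Fw] by auto
    also have "integral {0..A} (\<lambda>s. F (w s)) = integral {0..A} (\<lambda>s. F (u s))"
      by (rule integral_cong) (auto simp: w)
    also have "integral {A..t} (\<lambda>s. F (w s)) = integral {A..t} (\<lambda>s. F (v s))"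
      by (rule integral_cong) (auto simp: w vA)
    finally show ?thesis using False t ueq[of A] veq[of t] w[of t] A0 by (simp add: algebra_simps)
  qed
  show ?case using wc weq B by (simp add: w_def)
qed

lemma Useq_agree: "s \<le> real k * hh \<Longrightarrow> Useq x0 (k + j) s = Useq x0 k s"
proof (induction j)
  case 0 then show ?case by simp
next
  case (Suc j)
  have "s \<le> real (k + j) * hh" using Suc.prems hh_pos by (smt (verit) mult_right_mono of_nat_add of_nat_0_le_iff)
  then show ?case using Suc by simp
qed

definition Ug :: "real \<times> real \<Rightarrow> real \<Rightarrow> real \<times> real" where
  "Ug x0 t = Useq x0 (nat \<lceil>t / hh\<rceil> + 1) t"

lemma N_bound: "0 \<le> t \<Longrightarrow> t < real (nat \<lceil>t / hh\<rceil> + 1) * hh"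
proof -
  assume "0 \<le> t"
  have "t / hh \<le> real (nat \<lceil>t / hh\<rceil>)" by linarith
  hence "t \<le> real (nat \<lceil>t / hh\<rceil>) * hh" using hh_pos by (simp add: divide_le_eq)
  thus ?thesis using hh_pos by (simp add: algebra_simps)
qed

lemma Ug_eq: assumes "0 \<le> s" "s \<le> real M * hh" shows "Ug x0 s = Useq x0 M s"
proof -
  define N where "N = nat \<lceil>s / hh\<rceil> + 1"
  have sN: "s \<le> real N * hh" using N_bound[OF assms(1)] by (simp add: N_def)
  define k where "k = min N M"
  have sk: "s \<le> real k * hh" using sN assms by (simp add: k_def min_def)
  have "Useq x0 N s = Useq x0 (k + (N - k)) s" by (simp add: k_def)
  also have "\<dots> = Useq x0 k s" by (rule Useq_agree[OF sk])
  also have "\<dots> = Useq x0 (k + (M - k)) s" using Useq_agree[OF sk, where j="M - k"] by simp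
  also have "\<dots> = Useq x0 M s" by (simp add: k_def)
  finally show ?thesis by (simp add: Ug_def N_def)
qed

lemma Ug0: "Ug x0 0 = x0" by (simp add: Ug_def)

lemma Ug_deriv: assumes t: "0 \<le> t"
  shows "(Ug x0 has_vector_derivative F (Ug x0 t)) (at t within {0..})"
proof -
  define M where "M = nat \<lceil>t / hh\<rceil> + 1"
  define B where "B = real M * hh"
  define Y where "Y = Useq x0 M"
  have tB: "t < B" using N_bound[OF t] by (simp add: B_def M_def)
  have Yc: "continuous_on {0..B} Y" and Yeq: "\<And>s. s \<in> {0..B} \<Longrightarrow> Y s = x0 + integral {0..s} (\<lambda>s. F (Y s))"
    using Useq_sol[of M x0] by (auto simp: Y_def B_def)
  have FY: "continuous_on {0..B} (\<lambda>s. F (Y s))" by (rule continuous_on_compose2[OF F_cont Yc]) auto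
  have d: "((\<lambda>u. integral {0..u} (\<lambda>s. F (Y s))) has_vector_derivative F (Y t)) (at t within {0..B})"
    by (rule integral_has_vector_derivative[OF FY]) (use t tB in auto)
  have d2: "((\<lambda>u. x0 + integral {0..u} (\<lambda>s. F (Y s))) has_vector_derivative F (Y t)) (at t within {0..B})"
    using has_vector_derivative_add[OF has_vector_derivative_const d] by simp
  have d3: "(Ug x0 has_vector_derivative F (Y t)) (at t within {0..B})"
  proof (rule has_vector_derivative_transform_within[OF d2, of 1])
    fix x' assume "x' \<in> {0..B}"
    thus "x0 + integral {0..x'} (\<lambda>s. F (Y s)) = Ug x0 x'"
      using Yeq[of x'] Ug_eq[of x' M x0] by (auto simp: Y_def B_def)
  qed (use t tB in auto)
  have "at t within {0..B} = at t within {0..}"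
    by (rule at_within_nhd[where S="{-1<..<B}"]) (use t tB in auto)
  moreover have "Y t = Ug x0 t" using Ug_eq[of t M x0] t tB by (simp add: Y_def B_def)
  ultimately show ?thesis using d3 by simp
qed


lemma ar1:
  fixes a b r :: real assumes "\<bar>r\<bar> \<le> 4 * \<bar>a\<bar>"
  shows "2*a*b + 2*b*(r - 3*b) \<le> 5*(a^2+b^2)"
proof -
  have h1: "b*r \<le> \<bar>b\<bar>*\<bar>r\<bar>" by (metis abs_ge_self abs_mult)
  have h2: "\<bar>b\<bar>*\<bar>r\<bar> \<le> 4*(\<bar>a\<bar>*\<bar>b\<bar>)" using mult_left_mono[OF assms, of "\<bar>b\<bar>"] by (simp add: algebra_simps)
  have h3: "2*(\<bar>a\<bar>*\<bar>b\<bar>) \<le> a^2 + b^2"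
    using power2_diff[of "\<bar>a\<bar>" "\<bar>b\<bar>"] zero_le_power2[of "\<bar>a\<bar> - \<bar>b\<bar>"] by simp
  have h4: "2*(a*b) \<le> a^2 + b^2"
    using power2_diff[of a b] zero_le_power2[of "a - b"] by simp
  have h5: "0 \<le> b^2" by simp
  have "2*a*b + 2*b*(r - 3*b) = 2*(a*b) + 2*(b*r) - 6*b^2" by (simp add: algebra_simps power2_eq_square)
  also have "\<dots> \<le> 5*(a^2+b^2)" using h1 h2 h3 h4 h5 by (smt (verit))
  finally show ?thesis .
qed

lemma ar2:
  fixes a b r :: real assumes "\<bar>r\<bar> \<le> 4 * \<bar>a\<bar>"
  shows "0 \<le> 11*(a^2+b^2) + 2*a*b + 2*b*(r - 3*b)"
proof -
  have h1: "-(b*r) \<le> \<bar>b\<bar>*\<bar>r\<bar>" by (metis abs_ge_minus_self abs_mult)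
  have h2: "\<bar>b\<bar>*\<bar>r\<bar> \<le> 4*(\<bar>a\<bar>*\<bar>b\<bar>)" using mult_left_mono[OF assms, of "\<bar>b\<bar>"] by (simp add: algebra_simps)
  have h3: "2*(\<bar>a\<bar>*\<bar>b\<bar>) \<le> a^2 + b^2"
    using power2_diff[of "\<bar>a\<bar>" "\<bar>b\<bar>"] zero_le_power2[of "\<bar>a\<bar> - \<bar>b\<bar>"] by simp
  have h4: "-(2*(a*b)) \<le> a^2 + b^2"
    using power2_sum[of a b] zero_le_power2[of "a + b"] by simp
  have h5: "0 \<le> a^2" by simp
  have "11*(a^2+b^2) + 2*a*b + 2*b*(r - 3*b) = 11*(a^2+b^2) + 2*(a*b) + 2*(b*r) - 6*b^2"
    by (simp add: algebra_simps power2_eq_square)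
  also have "0 \<le> \<dots>" using h1 h2 h3 h4 h5 by (smt (verit))
  finally show ?thesis .
qed

lemma sol_facts:
  assumes "is_sol m n T V W"
  shows "V 0 = m" "W 0 = n"
    "\<And>t. 0 \<le> t \<Longrightarrow> ereal t < T \<Longrightarrow> (V has_real_derivative W t) (at t within {0..})"
    "\<And>t. 0 \<le> t \<Longrightarrow> ereal t < T \<Longrightarrow> continuous (at t within {0..}) W"
    "\<And>t. 0 \<le> t \<Longrightarrow> ereal t < T \<Longrightarrow> continuous (at t within {0..}) V"
    "\<And>t. 0 < t \<Longrightarrow> ereal t < T \<Longrightarrow> (W has_real_derivative (Rfun (V t) - 3 * W t)) (at t)"
    "\<And>t. 0 < t \<Longrightarrow> ereal t < T \<Longrightarrow> (V has_real_derivative W t) (at t)"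
    "\<And>b. 0 \<le> b \<Longrightarrow> ereal b < T \<Longrightarrow> continuous_on {0..b} V"
    "\<And>b. 0 \<le> b \<Longrightarrow> ereal b < T \<Longrightarrow> continuous_on {0..b} W"
proof -
  note A = assms[unfolded is_sol_def]
  show "V 0 = m" "W 0 = n" using A by auto
  show D: "\<And>t. 0 \<le> t \<Longrightarrow> ereal t < T \<Longrightarrow> (V has_real_derivative W t) (at t within {0..})"
    using A by auto
  show C: "\<And>t. 0 \<le> t \<Longrightarrow> ereal t < T \<Longrightarrow> continuous (at t within {0..}) W"
    using A by auto
  show CV: "\<And>t. 0 \<le> t \<Longrightarrow> ereal t < T \<Longrightarrow> continuous (at t within {0..}) V"
    using D DERIV_continuous by blast
  show "\<And>t. 0 < t \<Longrightarrow> ereal t < T \<Longrightarrow> (W has_real_derivative (Rfun (V t) - 3 * W t)) (at t)"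
    using A by auto
  show "\<And>t. 0 < t \<Longrightarrow> ereal t < T \<Longrightarrow> (V has_real_derivative W t) (at t)"
  proof -
    fix t :: real assume "0 < t" "ereal t < T"
    moreover have "at t within {0..} = at t" by (rule at_within_interior) (use \<open>0 < t\<close> in simp)
    ultimately show "(V has_real_derivative W t) (at t)" using D[of t] by simp
  qed
  show "\<And>b. 0 \<le> b \<Longrightarrow> ereal b < T \<Longrightarrow> continuous_on {0..b} V"
  proof -
    fix b :: real assume b: "0 \<le> b" "ereal b < T"
    show "continuous_on {0..b} V" unfolding continuous_on_eq_continuous_within
    proof
      fix x assume x: "x \<in> {0..b}"
      hence "ereal x < T" using b by (meson atLeastAtMost_iff ereal_less_eq(3) le_less_trans)
      thus "continuous (at x within {0..b}) V" using CV[of x] x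
        by (auto intro: continuous_within_subset)
    qed
  qed
  show "\<And>b. 0 \<le> b \<Longrightarrow> ereal b < T \<Longrightarrow> continuous_on {0..b} W"
  proof -
    fix b :: real assume b: "0 \<le> b" "ereal b < T"
    show "continuous_on {0..b} W" unfolding continuous_on_eq_continuous_within
    proof
      fix x assume x: "x \<in> {0..b}"
      hence "ereal x < T" using b by (meson atLeastAtMost_iff ereal_less_eq(3) le_less_trans)
      thus "continuous (at x within {0..b}) W" using C[of x] x
        by (auto intro: continuous_within_subset)
    qed
  qed
qed


lemma exists_sol: "\<exists>V W. is_sol m n \<infinity> V W"
proof -
  define U where "U = Ug (m, n)"
  have dU: "\<And>t. 0 \<le> t \<Longrightarrow> (U has_vector_derivative F (U t)) (at t within {0..})"
    unfolding U_def by (rule Ug_deriv)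
  define V where "V = (\<lambda>t. fst (U t))"
  define W where "W = (\<lambda>t. snd (U t))"
  have dV: "(V has_real_derivative W t) (at t within {0..})" if "0 \<le> t" for t
    using bounded_linear.has_vector_derivative[OF bounded_linear_fst dU[OF that]]
    by (simp add: has_real_derivative_iff_has_vector_derivative V_def W_def F_def)
  have dW: "(W has_real_derivative (Rfun (V t) - 3 * W t)) (at t within {0..})" if "0 \<le> t" for t
    using bounded_linear.has_vector_derivative[OF bounded_linear_snd dU[OF that]]
    by (simp add: has_real_derivative_iff_has_vector_derivative V_def W_def F_def)
  have "is_sol m n \<infinity> V W"
    unfolding is_sol_def
  proof (intro conjI allI impI)
    show "0 < (\<infinity>::ereal)" by simp
    show "V 0 = m" "W 0 = n" by (simp_all add: V_def W_def U_def Ug0)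
    fix t :: real
    { assume t: "0 \<le> t \<and> ereal t < \<infinity>"
      show "(V has_real_derivative W t) (at t within {0..})" using dV t by auto
      show "continuous (at t within {0..}) W" using dW t DERIV_continuous by blast }
    { assume t: "0 < t \<and> ereal t < \<infinity>"
      have "at t within {0..} = at t" by (rule at_within_interior) (use t in simp)
      thus "(W has_real_derivative Rfun (V t) - 3 * W t) (at t)" using dW[of t] t by simp }
  qed
  thus ?thesis by blast
qed

lemma uniq:
  assumes s1: "is_sol m n T1 V1 W1" and s2: "is_sol m n T2 V2 W2"
    and t: "0 \<le> t" "ereal t < T1" "ereal t < T2"
  shows "V1 t = V2 t \<and> W1 t = W2 t"
proof -
  note f1 = sol_facts[OF s1] and f2 = sol_facts[OF s2]
  define En where "En s = exp (- 5 * s) * ((V1 s - V2 s)^2 + (W1 s - W2 s)^2)" for s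
  have dom: "ereal s < T1" "ereal s < T2" if "s \<le> t" for s
    using that t by (meson ereal_less_eq(3) le_less_trans)+
  have "En t \<le> En 0"
  proof (rule DERIV_nonpos_imp_decreasing_open[OF t(1)])
    fix s assume s: "0 < s" "s < t"
    have d1: "DERIV V1 s :> W1 s" "DERIV W1 s :> Rfun (V1 s) - 3 * W1 s"
      using f1(6,7)[of s] s dom[of s] by auto
    have d2: "DERIV V2 s :> W2 s" "DERIV W2 s :> Rfun (V2 s) - 3 * W2 s"
      using f2(6,7)[of s] s dom[of s] by auto
    define a where "a = V1 s - V2 s"
    define b where "b = W1 s - W2 s"
    define r where "r = Rfun (V1 s) - Rfun (V2 s)"
    have "DERIV En s :> exp (- 5 * s) * (-5) * (a^2 + b^2) + exp (- 5 * s) * (2*a*b + 2*b*(r - 3*b))"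
      unfolding En_def a_def b_def r_def
      by (rule derivative_eq_intros d1 d2 refl | simp)+ (simp add: algebra_simps)
    moreover have "exp (- 5 * s) * (-5) * (a^2 + b^2) + exp (- 5 * s) * (2*a*b + 2*b*(r - 3*b)) \<le> 0"
    proof -
      have "2*a*b + 2*b*(r - 3*b) \<le> 5*(a^2+b^2)"
        by (rule ar1) (use Rfun_lip[of "V1 s" "V2 s"] in \<open>simp add: r_def a_def\<close>)
      hence "exp (- 5 * s) * (2*a*b + 2*b*(r - 3*b)) \<le> exp (- 5 * s) * (5*(a^2+b^2))"
        by (rule mult_left_mono) simp
      thus ?thesis by (simp add: algebra_simps)
    qed
    ultimately show "\<exists>y. DERIV En s :> y \<and> y \<le> 0" by blast
  next
    show "continuous_on {0..t} En" unfolding En_def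
      using f1(8,9)[OF t(1,2)] f2(8,9)[OF t(1,3)] by (intro continuous_intros) auto
  qed
  moreover have "En 0 = 0" using f1(1,2) f2(1,2) by (simp add: En_def)
  moreover have "0 \<le> (V1 t - V2 t)^2" "0 \<le> (W1 t - W2 t)^2" by simp_all
  ultimately have "(V1 t - V2 t)^2 + (W1 t - W2 t)^2 \<le> 0"
    by (simp add: En_def mult_le_0_iff)
  hence "(V1 t - V2 t)^2 = 0" "(W1 t - W2 t)^2 = 0"
    using \<open>0 \<le> (V1 t - V2 t)^2\<close> \<open>0 \<le> (W1 t - W2 t)^2\<close> by linarith+
  thus ?thesis by simp
qed


lemma classify:
  assumes m: "m < -1" and s: "is_sol m n \<infinity> V W" and nn: "\<forall>t>0. W t \<ge> 0"
  shows "n > 0 \<and> (\<forall>t>0. W t > 0)"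
proof -
  note f = sol_facts[OF s]
  have n0: "n \<ge> 0"
  proof (rule ccontr)
    assume "\<not> n \<ge> 0"
    hence w0: "W 0 < 0" using f(2) by simp
    have tw: "(W \<longlongrightarrow> W 0) (at 0 within {0..})" using f(4)[of 0] by (simp add: continuous_within)
    have "eventually (\<lambda>x. W x < 0) (at 0 within {0..})" by (rule order_tendstoD(2)[OF tw w0])
    then obtain d where d: "d > 0" "\<And>x. x \<in> {0..} \<Longrightarrow> x \<noteq> 0 \<Longrightarrow> dist x 0 < d \<Longrightarrow> W x < 0"
      unfolding eventually_at by auto
    have "W (d/2) < 0" using d by auto
    thus False using nn d by (metis half_gt_zero leD)
  qed
  have npos: "n > 0"
  proof (rule ccontr)
    assume "\<not> n > 0" hence nz: "n = 0" using n0 by simp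
    have tv: "(V \<longlongrightarrow> V 0) (at 0 within {0..})" using f(5)[of 0] by (simp add: continuous_within)
    have v0: "V 0 < -1" using f(1) m by simp
    have "eventually (\<lambda>x. V x < -1) (at 0 within {0..})" by (rule order_tendstoD(2)[OF tv v0])
    then obtain d where d: "d > 0" "\<And>x. x \<in> {0..} \<Longrightarrow> x \<noteq> 0 \<Longrightarrow> dist x 0 < d \<Longrightarrow> V x < -1"
      unfolding eventually_at by auto
    define t1 where "t1 = d/2"
    have t1: "0 < t1" "t1 < d" using d by (auto simp: t1_def)
    have "\<exists>l z. 0 < z \<and> z < t1 \<and> DERIV W z :> l \<and> W t1 - W 0 = (t1 - 0) * l"
    proof (rule MVT)
      show "continuous_on {0..t1} W" using f(9)[of t1] t1 by simp
      fix x assume "0 < x" "x < t1"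
      thus "W differentiable (at x)" using f(6)[of x] by (auto simp: real_differentiable_def)
    qed (use t1 in auto)
    then obtain l z where z: "0 < z" "z < t1" "DERIV W z :> l" "W t1 - W 0 = t1 * l" by auto
    have "l = Rfun (V z) - 3 * W z" using DERIV_unique[OF z(3) f(6)[of z]] z by simp
    moreover have "V z < -1" using d(2)[of z] z t1 by auto
    moreover have "W z \<ge> 0" using nn z by auto
    ultimately have "l < 0" using Rfun_neg[of "V z"] by linarith
    hence "W t1 < 0" using z(4) f(2) nz t1 by (simp add: mult_pos_neg)
    thus False using nn t1 by force
  qed
  have "W t0 > 0" if t0: "t0 > 0" for t0
  proof (rule ccontr)
    assume "\<not> W t0 > 0"
    hence W0: "W t0 = 0" using nn t0 by force
    have dW: "DERIV W t0 :> Rfun (V t0)" using f(6)[of t0] t0 W0 by simp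
    consider "V t0 < -1" | "V t0 > -1" | "V t0 = -1" by linarith
    thus False
    proof cases
      case 1
      from DERIV_neg_dec_right[OF dW Rfun_neg[OF 1]] obtain d where
        d: "d > 0" "\<And>h. h > 0 \<Longrightarrow> h < d \<Longrightarrow> W t0 > W (t0 + h)" by auto
      have "W (t0 + d/2) < 0" using d(2)[of "d/2"] d W0 by auto
      thus False using nn t0 d by (metis add_pos_pos half_gt_zero leD)
    next
      case 2
      from DERIV_pos_inc_left[OF dW Rfun_pos[OF 2]] obtain d where
        d: "d > 0" "\<And>h. h > 0 \<Longrightarrow> h < d \<Longrightarrow> W (t0 - h) < W t0" by auto
      define h where "h = min (d/2) (t0/2)"
      have h: "h > 0" "h < d" "t0 - h > 0" using d t0 by (auto simp: h_def)
      have "W (t0 - h) < 0" using d(2)[OF h(1,2)] W0 by simp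
      moreover have "W (t0 - h) \<ge> 0" using nn h(3) by blast
      ultimately show False by linarith
    next
      case 3
      define En where "En s = exp (11 * s) * ((V s + 1)^2 + (W s)^2)" for s
      have "En 0 \<le> En t0"
      proof (rule DERIV_nonneg_imp_increasing_open[of 0 t0 En])
        show "0 \<le> t0" using t0 by simp
        fix s assume s: "0 < s" "s < t0"
        define a where "a = V s + 1"
        define b where "b = W s"
        define r where "r = Rfun (V s)"
        have "DERIV En s :> exp (11 * s) * 11 * (a^2 + b^2) + exp (11 * s) * (2*a*b + 2*b*(r - 3*b))"
          unfolding En_def a_def b_def r_def
          by (rule derivative_eq_intros f(6)[of s] f(7)[of s] refl | use s in simp)+
        moreover have "0 \<le> exp (11 * s) * 11 * (a^2 + b^2) + exp (11 * s) * (2*a*b + 2*b*(r - 3*b))"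
        proof -
          have "0 \<le> 11*(a^2+b^2) + 2*a*b + 2*b*(r - 3*b)"
            by (rule ar2) (use Rfun_lip[of "V s" "-1"] Rfun_m1 in \<open>simp add: r_def a_def\<close>)
          hence "0 \<le> exp (11 * s) * (11*(a^2+b^2) + 2*a*b + 2*b*(r - 3*b))" by simp
          thus ?thesis by (simp add: algebra_simps)
        qed
        ultimately show "\<exists>y. DERIV En s :> y \<and> y \<ge> 0" by blast
      next
        show "continuous_on {0..t0} En" unfolding En_def
          using f(8,9)[of t0] t0 by (intro continuous_intros) auto
      qed
      moreover have "En t0 = 0" using 3 W0 by (simp add: En_def)
      moreover have "En 0 > 0" using f(1,2) m by (simp add: En_def add_pos_nonneg)
      ultimately show False by simp
    qed
  qed
  with npos show ?thesis by blast
qed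

lemma max_sol_ex: "\<exists>V W. max_sol m n \<infinity> V W"
proof -
  obtain V W where s: "is_sol m n \<infinity> V W" using exists_sol by blast
  have "max_sol m n \<infinity> V W"
    unfolding max_sol_def using s uniq[of m n _ _ _ \<infinity> V W] by (auto simp del: ereal_less_PInfty)
  thus ?thesis by blast
qed

lemma max_sol_uniq:
  assumes "max_sol m n T1 V1 W1" "max_sol m n T2 V2 W2"
  shows "T1 = T2 \<and> (\<forall>t. 0 \<le> t \<and> ereal t < T1 \<longrightarrow> V1 t = V2 t \<and> W1 t = W2 t)"
  using assms unfolding max_sol_def by (meson order_antisym)

theorem lemma4p1:
  fixes m :: real
  assumes "m < -1"
  shows "UNIV = beta_minus m \<union> beta_zero m \<union> beta_plus m \<and>
         beta_minus m \<inter> beta_zero m = {} \<and>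
         beta_minus m \<inter> beta_plus m = {} \<and>
         beta_zero m \<inter> beta_plus m = {}"
proof (intro conjI)
  show "UNIV = beta_minus m \<union> beta_zero m \<union> beta_plus m"
  proof (rule set_eqI, rule iffI)
    fix n :: real
    obtain V W where ms: "max_sol m n \<infinity> V W" using max_sol_ex by blast
    hence s: "is_sol m n \<infinity> V W" by (simp add: max_sol_def)
    show "n \<in> beta_minus m \<union> beta_zero m \<union> beta_plus m"
    proof (cases "\<exists>t>0. W t < 0")
      case True
      then obtain t where t: "t > 0" "W t < 0" by blast
      have "n \<in> beta_minus m" unfolding beta_minus_def
        by (rule CollectI, rule exI[of _ "\<infinity>"], rule exI[of _ V], rule exI[of _ W]) (use ms t in auto)
      thus ?thesis by simp
    next
      case False
      hence "\<forall>t>0. W t \<ge> 0" by force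
      from classify[OF assms s this] have c: "n > 0" "\<forall>t>0. W t > 0" by auto
      show ?thesis
      proof (cases "\<forall>t>0. V t \<le> -1")
        case True
        have "n \<in> beta_zero m" unfolding beta_zero_def
          by (rule CollectI, rule exI[of _ "\<infinity>"], rule exI[of _ V], rule exI[of _ W]) (use ms c True in auto)
        thus ?thesis by simp
      next
        case False
        have W0: "W 0 = n" using s by (simp add: is_sol_def)
        have "\<forall>t\<ge>0. W t > 0"
          using c W0 by (metis le_less)
        then have "n \<in> beta_plus m" unfolding beta_plus_def
          by (intro CollectI exI[of _ "\<infinity>"] exI[of _ V] exI[of _ W]) (use ms False in force)
        thus ?thesis by simp
      qed
    qed
  qed simp
  show "beta_minus m \<inter> beta_zero m = {}"
  proof -
    { fix n assume "n \<in> beta_minus m" "n \<in> beta_zero m"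
      then obtain T1 V1 W1 T2 V2 W2 t where a: "max_sol m n T1 V1 W1" "t > 0" "ereal t < T1" "W1 t < 0"
        and b: "max_sol m n T2 V2 W2" "\<forall>t>0. ereal t < T2 \<longrightarrow> W2 t > 0 \<and> V2 t \<le> -1"
        unfolding beta_minus_def beta_zero_def by blast
      from max_sol_uniq[OF a(1) b(1)] a have "ereal t < T2" "W1 t = W2 t" "V1 t = V2 t" by auto
      with a b have False by force }
    thus ?thesis by blast
  qed
  show "beta_minus m \<inter> beta_plus m = {}"
  proof -
    { fix n assume "n \<in> beta_minus m" "n \<in> beta_plus m"
      then obtain T1 V1 W1 T2 V2 W2 t where a: "max_sol m n T1 V1 W1" "t > 0" "ereal t < T1" "W1 t < 0"
        and b: "max_sol m n T2 V2 W2" "\<forall>t\<ge>0. ereal t < T2 \<longrightarrow> W2 t > 0"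
        unfolding beta_minus_def beta_plus_def by blast
      from max_sol_uniq[OF a(1) b(1)] a have "ereal t < T2" "W1 t = W2 t" "V1 t = V2 t" by auto
      have "W2 t > 0" using b(2) a(2) \<open>ereal t < T2\<close> by simp
      with a \<open>W1 t = W2 t\<close> have False by simp }
    thus ?thesis by blast
  qed
  show "beta_zero m \<inter> beta_plus m = {}"
  proof -
    { fix n assume "n \<in> beta_zero m" "n \<in> beta_plus m"
      then obtain T1 V1 W1 T2 V2 W2 t where a: "max_sol m n T1 V1 W1" "\<forall>t>0. ereal t < T1 \<longrightarrow> W1 t > 0 \<and> V1 t \<le> -1"
        and b: "max_sol m n T2 V2 W2" "t > 0" "ereal t < T2" "V2 t > -1"
        unfolding beta_zero_def beta_plus_def by blast
      from max_sol_uniq[OF a(1) b(1)] b have "ereal t < T1" "V1 t = V2 t" by auto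
      moreover have "V1 t \<le> -1" using a(2) b(2) \<open>ereal t < T1\<close> by simp
      ultimately have False using b(4) by simp }
    thus ?thesis by blast
  qed
qed

end
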